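(* Let $\gamma=(q_i)_{i=0,\dots,r}$ be a finite sequence of modes such that $D_{q_i}\cap D_{q_{i+1}}\neq\emptyset$ for all $i$, let $\Omega_\gamma=\bigcup_{i=0}^rD_{q_i}$, and let $\mathcal{T}_f\subset D_{q_0}$. Define targets recursively by $\tau_0=\mathcal{T}_f$ and $\tau_{i+1}=\mathcal{C}_{\mathcal{H}}(\tau_i,D_{q_i})\cap G_{(q_i,q_{i+1})}$ for $i=0,\dots,r-1$, where $G_{(q_i,q_{i+1})}=\partial D_{q_i}\cap\partial D_{q_{i+1}}$, and set $$\underline{\mathcal{C}}_{\mathcal{H}}(\Omega_\gamma)=\mathcal{C}_{\mathcal{H}}(\tau_0,D_{q_0})\cup\mathcal{C}_{\mathcal{H}}(\tau_1,D_{q_1})\cup\dots\cup\mathcal{C}_{\mathcal{H}}(\tau_r,D_{q_r}).$$ Then $\underline{\mathcal{C}}_{\mathcal{H}}(\Omega_\gamma)\subset\mathcal{C}_{\mathcal{H}}(\mathcal{T}_f,\Omega_\gamma)$.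
   Context: Let $\mathbb{U}_m\subset\mathbb{R}^m$ be a compact convex polytope and $f_h:\mathbb{R}^n\times\mathbb{U}_m\to\mathbb{R}^n$ the continuous piecewise affine vector field of the hybrid model (affine on each simplex of a simplicial mesh of $\mathbb{R}^n\times\mathbb{U}_m$ whose projections onto $\mathbb{R}^n$ form a simplicial mesh $(D_q)_{q\in\mathcal{Q}}$ of $\mathbb{R}^n$; the $D_q$ are the cells of modes $q$). For $\mathcal{T}\subset D\subset\mathbb{R}^n$, $\mathcal{C}_{\mathcal{H}}(\mathcal{T},D)$ is the set of $X_0\in D$ for which there exist a finite time $T>0$ and a measurable control $u:[0,T]\to\mathbb{U}_m$ such that the solution $X_h$ of $\dot X=f_h(X,u)$, $X(0)=X_0$ satisfies $X_h(T)\in\mathcal{T}$ and $X_h(t)\in D$ for all $t\in[0,T]$. *)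

theory Defs
  imports "HOL-Analysis.Analysis"
begin

definition simplicial_mesh :: "'a::euclidean_space set set \<Rightarrow> 'a set \<Rightarrow> bool" where
  "simplicial_mesh M X \<longleftrightarrow>
     (\<forall>S\<in>M. (aff_dim X) simplex S) \<and>
     \<Union>M = X \<and>
     (\<forall>S\<in>M. \<forall>S'\<in>M. (S \<inter> S') face_of S \<and> (S \<inter> S') face_of S') \<and>
     (\<forall>K. compact K \<longrightarrow> finite {S\<in>M. S \<inter> K \<noteq> {}})"

definition admissible_control :: "'b::euclidean_space set \<Rightarrow> real \<Rightarrow> (real \<Rightarrow> 'b) \<Rightarrow> bool" where
  "admissible_control U T u \<longleftrightarrow>
     u \<in> borel_measurable (restrict_space lborel {0..T}) \<and> (\<forall>t\<in>{0..T}. u t \<in> U)"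

text \<open>Caratheodory solution of X' = f(X,u), X(0) = X0 on [0,T].\<close>
definition is_solution :: "('a::euclidean_space \<Rightarrow> 'b \<Rightarrow> 'a) \<Rightarrow> (real \<Rightarrow> 'b) \<Rightarrow> 'a \<Rightarrow> real \<Rightarrow> (real \<Rightarrow> 'a) \<Rightarrow> bool" where
  "is_solution f u X0 T X \<longleftrightarrow>
     X 0 = X0 \<and> continuous_on {0..T} X \<and>
     (\<forall>t\<in>{0..T}. ((\<lambda>s. f (X s) (u s)) has_integral (X t - X0)) {0..t})"

definition capture_basin :: "('a::euclidean_space \<Rightarrow> 'b::euclidean_space \<Rightarrow> 'a) \<Rightarrow> 'b set \<Rightarrow> 'a set \<Rightarrow> 'a set \<Rightarrow> 'a set" where
  "capture_basin f U Tg D = {X0 \<in> D. \<exists>T u X. T > 0 \<and> admissible_control U T u \<and>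
       is_solution f u X0 T X \<and> X T \<in> Tg \<and> (\<forall>t\<in>{0..T}. X t \<in> D)}"

primrec tau :: "('a::euclidean_space \<Rightarrow> 'b::euclidean_space \<Rightarrow> 'a) \<Rightarrow> 'b set \<Rightarrow> ('q \<Rightarrow> 'a set)
                 \<Rightarrow> (nat \<Rightarrow> 'q) \<Rightarrow> 'a set \<Rightarrow> nat \<Rightarrow> 'a set" where
  "tau f U D q Tf 0 = Tf"
| "tau f U D q Tf (Suc i) =
     capture_basin f U (tau f U D q Tf i) (D (q i)) \<inter> (frontier (D (q i)) \<inter> frontier (D (q (Suc i))))"

end

theory Submission
  imports Defs
begin


lemma concat_meas:
  fixes u v :: "real \<Rightarrow> 'b::euclidean_space"
  assumes T: "T > 0" "T' > 0"
    and u: "admissible_control U T u" and v: "admissible_control U T' v"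
  shows "admissible_control U (T+T') (\<lambda>t. if t \<le> T then u t else v (t - T))"
proof -
  have um: "(\<lambda>x. indicator {0..T} x *\<^sub>R u x) \<in> borel_measurable lborel"
    using u unfolding admissible_control_def
    by (subst (asm) borel_measurable_restrict_space_iff) auto
  have vm0: "(\<lambda>x. indicator {0..T'} x *\<^sub>R v x) \<in> borel_measurable lborel"
    using v unfolding admissible_control_def
    by (subst (asm) borel_measurable_restrict_space_iff) auto
  have sh: "(\<lambda>t::real. t - T) \<in> measurable lborel lborel" by simp
  have vm: "(\<lambda>t. indicator {0..T'} (t - T) *\<^sub>R v (t - T)) \<in> borel_measurable lborel"
    using measurable_compose[OF sh vm0] by (simp add: o_def)
  have eq: "(\<lambda>t. indicator {0..T+T'} t *\<^sub>R (if t \<le> T then u t else v (t - T))) =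
     (\<lambda>t. indicator {0..T} t *\<^sub>R u t + indicator {T<..} t *\<^sub>R (indicator {0..T'} (t - T) *\<^sub>R v (t - T)))"
    using T by (auto simp: indicator_def fun_eq_iff)
  have "(\<lambda>t. indicator {0..T+T'} t *\<^sub>R (if t \<le> T then u t else v (t - T))) \<in> borel_measurable lborel"
    unfolding eq using um vm by measurable
  then have "(\<lambda>t. if t \<le> T then u t else v (t - T)) \<in> borel_measurable (restrict_space lborel {0..T+T'})"
    by (subst borel_measurable_restrict_space_iff) auto
  moreover have "\<forall>t\<in>{0..T+T'}. (if t \<le> T then u t else v (t - T)) \<in> U"
    using u v unfolding admissible_control_def by auto
  ultimately show ?thesis unfolding admissible_control_def by blast
qed


lemma concat_sol:
  fixes u v :: "real \<Rightarrow> 'b::euclidean_space" and f :: "'a::euclidean_space \<Rightarrow> 'b \<Rightarrow> 'a"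
  assumes T: "T > 0" "T' > 0"
    and X: "is_solution f u X0 T X" and Y: "is_solution f v (X T) T' Y"
  shows "is_solution f (\<lambda>t. if t \<le> T then u t else v (t - T)) X0 (T+T')
           (\<lambda>t. if t \<le> T then X t else Y (t - T))"
proof -
  let ?w = "\<lambda>t. if t \<le> T then u t else v (t - T)"
  let ?Z = "\<lambda>t. if t \<le> T then X t else Y (t - T)"
  have X0: "X 0 = X0" and Xc: "continuous_on {0..T} X"
    and Xi: "\<And>t. t \<in> {0..T} \<Longrightarrow> ((\<lambda>s. f (X s) (u s)) has_integral (X t - X0)) {0..t}"
    using X unfolding is_solution_def by auto
  have Y0: "Y 0 = X T" and Yc: "continuous_on {0..T'} Y"
    and Yi: "\<And>t. t \<in> {0..T'} \<Longrightarrow> ((\<lambda>s. f (Y s) (v s)) has_integral (Y t - X T)) {0..t}"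
    using Y unfolding is_solution_def by auto
  have "?Z 0 = X0" using T X0 by simp
  moreover have "continuous_on {0..T+T'} ?Z"
  proof (rule continuous_on_cases_le[where h="\<lambda>t. t"])
    show "continuous_on {t \<in> {0..T + T'}. t \<le> T} X"
      by (rule continuous_on_subset[OF Xc]) auto
    have "continuous_on {t \<in> {0..T + T'}. T \<le> t} (Y \<circ> (\<lambda>t. t - T))"
    proof (rule continuous_on_compose)
      show "continuous_on {t \<in> {0..T + T'}. T \<le> t} (\<lambda>t. t - T)"
        by (intro continuous_intros)
      show "continuous_on ((\<lambda>t. t - T) ` {t \<in> {0..T + T'}. T \<le> t}) Y"
        by (rule continuous_on_subset[OF Yc]) auto
    qed
    then show "continuous_on {t \<in> {0..T + T'}. T \<le> t} (\<lambda>t. Y (t - T))"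
      by (simp add: o_def)
  qed (auto intro: continuous_intros simp: Y0)
  moreover have "((\<lambda>s. f (?Z s) (?w s)) has_integral (?Z t - X0)) {0..t}"
    if t: "t \<in> {0..T+T'}" for t
  proof (cases "t \<le> T")
    case True
    have "((\<lambda>s. f (X s) (u s)) has_integral (X t - X0)) {0..t}"
      using Xi True t by auto
    then show ?thesis
      using True by (rule_tac has_integral_eq[rotated]) auto
  next
    case False
    have i1: "((\<lambda>s. f (?Z s) (?w s)) has_integral (X T - X0)) {0..T}"
      using Xi[of T] T by (rule_tac has_integral_eq[rotated]) auto
    have "((\<lambda>s. f (Y s) (v s)) has_integral (Y (t - T) - X T)) (cbox 0 (t - T))"
      using Yi[of "t - T"] False t by auto
    from has_integral_affinity'[OF this, of 1 "- T"]
    have i2': "((\<lambda>s. f (Y (s - T)) (v (s - T))) has_integral (Y (t - T) - X T)) {T..t}"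
      by simp
    have i2: "((\<lambda>s. f (?Z s) (?w s)) has_integral (Y (t - T) - X T)) {T..t}"
      by (rule has_integral_spike_finite[where S="{T}", OF _ _ i2']) auto
    have "((\<lambda>s. f (?Z s) (?w s)) has_integral ((X T - X0) + (Y (t - T) - X T))) {0..t}"
      by (rule has_integral_combine[OF _ _ i1 i2]) (use T False in auto)
    then show ?thesis using False by simp
  qed
  ultimately show ?thesis unfolding is_solution_def by blast
qed

lemma cb_mono: "A \<subseteq> B \<Longrightarrow> capture_basin f U Tg A \<subseteq> capture_basin f U Tg B"
  unfolding capture_basin_def by blast

lemma cb_step:
  assumes "X0 \<in> capture_basin f U Tg A" and "Tg \<subseteq> capture_basin f U Tf B"
  shows "X0 \<in> capture_basin f U Tf (A \<union> B)"
proof -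
  from assms(1) obtain T u X where X0: "X0 \<in> A" and T: "T > 0" and u: "admissible_control U T u"
    and X: "is_solution f u X0 T X" and XT: "X T \<in> Tg" and XA: "\<forall>t\<in>{0..T}. X t \<in> A"
    unfolding capture_basin_def by blast
  from assms(2) XT obtain T' v Y where T': "T' > 0" and v: "admissible_control U T' v"
    and Y: "is_solution f v (X T) T' Y" and YT: "Y T' \<in> Tf" and YB: "\<forall>t\<in>{0..T'}. Y t \<in> B"
    unfolding capture_basin_def by blast
  let ?w = "\<lambda>t. if t \<le> T then u t else v (t - T)"
  let ?Z = "\<lambda>t. if t \<le> T then X t else Y (t - T)"
  have "admissible_control U (T+T') ?w" by (rule concat_meas[OF T T' u v])
  moreover have "is_solution f ?w X0 (T+T') ?Z" by (rule concat_sol[OF T T' X Y])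
  moreover have "?Z (T+T') \<in> Tf" using YT T' by simp
  moreover have "\<forall>t\<in>{0..T+T'}. ?Z t \<in> A \<union> B" using XA YB by auto
  ultimately show ?thesis using X0 T T' unfolding capture_basin_def
    by (intro CollectI conjI UnI1 exI[where x="T+T'"] exI[where x="?w"] exI[where x="?Z"]) auto
qed

lemma main_ind:
  "i \<le> r \<Longrightarrow> capture_basin f U (tau f U D q Tf i) (D (q i))
      \<subseteq> capture_basin f U Tf (\<Union>j\<le>i. D (q j))"
proof (induction i)
  case 0
  then show ?case by (simp add: cb_mono)
next
  case (Suc i)
  have IH: "tau f U D q Tf (Suc i) \<subseteq> capture_basin f U Tf (\<Union>j\<le>i. D (q j))"
    using Suc by auto
  have "capture_basin f U (tau f U D q Tf (Suc i)) (D (q (Suc i)))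
     \<subseteq> capture_basin f U Tf (D (q (Suc i)) \<union> (\<Union>j\<le>i. D (q j)))"
    using cb_step[OF _ IH] by blast
  also have "D (q (Suc i)) \<union> (\<Union>j\<le>i. D (q j)) = (\<Union>j\<le>Suc i. D (q j))"
    by (auto simp: atMost_Suc)
  finally show ?case .
qed

theorem proposition10:
  fixes f :: "'a::euclidean_space \<Rightarrow> 'b::euclidean_space \<Rightarrow> 'a"
    and U :: "'b set" and M :: "('a \<times> 'b) set set"
    and Q :: "'q set" and D :: "'q \<Rightarrow> 'a set"
    and q :: "nat \<Rightarrow> 'q" and r :: nat and Tf :: "'a set"
  assumes U_polytope: "polytope U"
    and mesh: "simplicial_mesh M (UNIV \<times> U)"
    and f_cont: "continuous_on (UNIV \<times> U) (\<lambda>z. f (fst z) (snd z))"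
    and f_pw_affine: "\<forall>S\<in>M. \<exists>A c. linear A \<and> (\<forall>z\<in>S. f (fst z) (snd z) = A z + c)"
    and proj_mesh: "D ` Q = (\<lambda>S. fst ` S) ` M"
    and D_mesh: "simplicial_mesh (D ` Q) UNIV"
    and q_modes: "\<forall>i\<le>r. q i \<in> Q"
    and q_adj: "\<forall>i<r. D (q i) \<inter> D (q (Suc i)) \<noteq> {}"
    and Tf_sub: "Tf \<subseteq> D (q 0)"
  shows "(\<Union>i\<le>r. capture_basin f U (tau f U D q Tf i) (D (q i)))
           \<subseteq> capture_basin f U Tf (\<Union>i\<le>r. D (q i))"
proof
  fix x assume "x \<in> (\<Union>i\<le>r. capture_basin f U (tau f U D q Tf i) (D (q i)))"
  then obtain i where i: "i \<le> r" and x: "x \<in> capture_basin f U (tau f U D q Tf i) (D (q i))"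
    by blast
  have sub: "(\<Union>j\<le>i. D (q j)) \<subseteq> (\<Union>j\<le>r. D (q j))" using i by fastforce
  show "x \<in> capture_basin f U Tf (\<Union>i\<le>r. D (q i))"
    using cb_mono[OF sub] main_ind[OF i] x by blast
qed

end
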